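(* Let $h_0\in(0,2\pi)$, $\alpha>0$ and $T>0$ be constants. Let $k\colon[0,2\pi]\to(0,+\infty)$ be a twice continuously differentiable positive function with $k(0)=k(2\pi)$, $k'(0)=k'(2\pi)$, and let $\varphi\colon[-h_0,2\pi]\to[0,+\infty)$ be a twice continuously differentiable nonnegative function with $\int_0^{2\pi}\varphi(x)\,\mathrm{d}x=1$ and $\varphi(x)=\varphi(x+2\pi)$ for all $x\in[-h_0,0]$. Suppose that for every $h\in(0,h_0]$ there exists a solution $u_h\in\mathbf C^{2,1}([0,2\pi]\times[0,T])$ of the problem $$\frac{\partial u(x,t)}{\partial t}=u(x,t)\bigl(k(x)\,u(x-h,t)-f[u(\cdot,t)]\bigr)+\alpha\frac{\partial^2u(x,t)}{\partial x^2},\quad 0\le x\le 2\pi,\ 0\le t\le T,$$ $$u(x,0)=\varphi(x),\qquad u(0,t)=u(2\pi,t),\qquad \frac{\partial u}{\partial x}(0,t)=\frac{\partial u}{\partial x}(2\pi,t),$$ where $u(x-h,t):=u(x-h+2\pi,t)$ whenever $x-h<0$ and $f[u(\cdot,t)]=\int_0^{2\pi}k(x)\,u(x,t)\,u(x-h,t)\,\mathrm{d}x$. Assume moreover that $$\sup_{0<h\le h_0}\|u_h\|_{\mathbf C^{2,1}([0,2\pi]\times[0,T])}<\infty.$$ Then there exists $h^*\in(0,h_0]$ such that $u_h$ is a nonnegative function on $[0,2\pi]\times[0,T]$ for every $h\in(0,h^*]$.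
   Context: $\mathbf C^{2,1}([0,2\pi]\times[0,T])$ denotes the Banach space of continuous functions $w(x,t)$ on $[0,2\pi]\times[0,T]$ such that $\partial w/\partial x$, $\partial^2 w/\partial x^2$, $\partial w/\partial t$ are continuous on $[0,2\pi]\times[0,T]$ (continuity up to the boundary meaning the limits from the interior exist and are taken as boundary values), with norm $$\|w\|_{\mathbf C^{2,1}}=\max_{0\le x\le2\pi,\,0\le t\le T}\Bigl\{|w|+\Bigl|\tfrac{\partial w}{\partial x}\Bigr|+\Bigl|\tfrac{\partial^2 w}{\partial x^2}\Bigr|+\Bigl|\tfrac{\partial w}{\partial t}\Bigr|\Bigr\}.$$ *)

theory Defs
  imports "HOL-Analysis.Analysis"
begin

definition C2_on :: "real \<Rightarrow> real \<Rightarrow> (real \<Rightarrow> real) \<Rightarrow> (real \<Rightarrow> real) \<Rightarrow> (real \<Rightarrow> real) \<Rightarrow> bool" where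
  "C2_on a b f f' f'' \<longleftrightarrow>
     continuous_on {a..b} f \<and> continuous_on {a..b} f' \<and> continuous_on {a..b} f'' \<and>
     (\<forall>x\<in>{a..b}. (f has_real_derivative f' x) (at x within {a..b}) \<and>
                  (f' has_real_derivative f'' x) (at x within {a..b}))"

definition C21 :: "real \<Rightarrow> (real \<Rightarrow> real \<Rightarrow> real) \<Rightarrow> (real \<Rightarrow> real \<Rightarrow> real) \<Rightarrow>
     (real \<Rightarrow> real \<Rightarrow> real) \<Rightarrow> (real \<Rightarrow> real \<Rightarrow> real) \<Rightarrow> bool" where
  "C21 T w wx wxx wt \<longleftrightarrow>
     continuous_on ({0..2*pi} \<times> {0..T}) (\<lambda>(x,t). w x t) \<and>
     continuous_on ({0..2*pi} \<times> {0..T}) (\<lambda>(x,t). wx x t) \<and>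
     continuous_on ({0..2*pi} \<times> {0..T}) (\<lambda>(x,t). wxx x t) \<and>
     continuous_on ({0..2*pi} \<times> {0..T}) (\<lambda>(x,t). wt x t) \<and>
     (\<forall>x\<in>{0..2*pi}. \<forall>t\<in>{0..T}.
        ((\<lambda>y. w y t) has_real_derivative wx x t) (at x within {0..2*pi}) \<and>
        ((\<lambda>y. wx y t) has_real_derivative wxx x t) (at x within {0..2*pi}) \<and>
        ((\<lambda>s. w x s) has_real_derivative wt x t) (at t within {0..T}))"

definition shift :: "real \<Rightarrow> real \<Rightarrow> real" where
  "shift h x = (if x - h < 0 then x - h + 2*pi else x - h)"

definition fterm :: "(real \<Rightarrow> real) \<Rightarrow> real \<Rightarrow> (real \<Rightarrow> real \<Rightarrow> real) \<Rightarrow> real \<Rightarrow> real" where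
  "fterm k h w t = integral {0..2*pi} (\<lambda>x. k x * w x t * w (shift h x) t)"

end

theory Submission imports Defs begin

lemma deriv_min_left:
  fixes g :: "real \<Rightarrow> real"
  assumes d: "(g has_real_derivative D) (at a within S)" and ba: "b < a" "{b..a} \<subseteq> S"
    and mn: "\<forall>s\<in>S. g a \<le> g s"
  shows "D \<le> 0"
proof -
  have "(g has_real_derivative D) (at a within {b..a})" using DERIV_subset[OF d ba(2)] .
  hence lim: "((\<lambda>y. (g y - g a)/(y-a)) \<longlongrightarrow> D) (at_left a)"
    using at_within_Icc_at_left[OF ba(1)] by (simp add: has_field_derivative_iff)
  have "\<forall>\<^sub>F y in at_left a. (g y - g a)/(y-a) \<le> 0"
  proof -
    show ?thesis using eventually_at_left_real[OF ba(1)]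
    proof eventually_elim
      case (elim y)
      then have "y \<in> S" using ba(2) by auto
      then have "g a \<le> g y" using mn by blast
      then show ?case using elim by (intro divide_nonneg_neg) auto
    qed
  qed
  then show ?thesis using tendsto_upperbound[OF lim] trivial_limit_at_left_real by blast
qed

lemma deriv_min_right:
  fixes g :: "real \<Rightarrow> real"
  assumes d: "(g has_real_derivative D) (at a within S)" and ba: "a < b" "{a..b} \<subseteq> S"
    and mn: "\<forall>s\<in>S. g a \<le> g s"
  shows "D \<ge> 0"
proof -
  have "(g has_real_derivative D) (at a within {a..b})" using DERIV_subset[OF d ba(2)] .
  hence lim: "((\<lambda>y. (g y - g a)/(y-a)) \<longlongrightarrow> D) (at_right a)"
    using at_within_Icc_at_right[OF ba(1)] by (simp add: has_field_derivative_iff)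
  have "\<forall>\<^sub>F y in at_right a. (g y - g a)/(y-a) \<ge> 0"
  proof -
    show ?thesis using eventually_at_right_real[OF ba(1)]
    proof eventually_elim
      case (elim y)
      then have "y \<in> S" using ba(2) by auto
      then have "g a \<le> g y" using mn by blast
      then show ?case using elim by (auto intro: divide_nonneg_pos)
    qed
  qed
  then show ?thesis using tendsto_lowerbound[OF lim] trivial_limit_at_right_real by blast
qed

lemma second_deriv_min:
  fixes f f' f'' :: "real \<Rightarrow> real"
  assumes df: "\<forall>x\<in>{a..b}. (f has_real_derivative f' x) (at x within {a..b})"
    and df': "\<forall>x\<in>{a..b}. (f' has_real_derivative f'' x) (at x within {a..b})"
    and x1: "a \<le> x1" "x1 < b" and z: "f' x1 = 0"
    and mn: "\<forall>s\<in>{a..b}. f x1 \<le> f s"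
  shows "f'' x1 \<ge> 0"
proof (rule ccontr)
  assume neg: "\<not> f'' x1 \<ge> 0"
  have "(f' has_real_derivative f'' x1) (at x1 within {x1..b})"
    by (rule DERIV_subset[OF df'[rule_format]]) (use x1 in auto)
  hence lim: "((\<lambda>y. (f' y - f' x1)/(y-x1)) \<longlongrightarrow> f'' x1) (at_right x1)"
    using at_within_Icc_at_right[OF x1(2)] by (simp add: has_field_derivative_iff)
  have "\<forall>\<^sub>F y in at_right x1. (f' y - f' x1)/(y-x1) < 0"
    using order_tendstoD(2)[OF lim] neg by simp
  moreover have "\<forall>\<^sub>F y in at_right x1. y \<in> {x1<..<b}" using eventually_at_right_real[OF x1(2)] .
  ultimately have "\<forall>\<^sub>F y in at_right x1. f' y < 0"
    by eventually_elim (use z in \<open>auto simp: divide_less_0_iff\<close>)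
  then obtain c where c: "c > x1" "\<And>y. y > x1 \<Longrightarrow> y < c \<Longrightarrow> f' y < 0"
    unfolding eventually_at_right_field by blast
  define y where "y = (x1 + min c b) / 2"
  have y: "x1 < y" "y < c" "y \<le> b" using c x1 unfolding y_def by auto
  have "\<exists>\<xi>\<in>{x1<..<y}. f y - f x1 = (*) (f' \<xi>) (y - x1)"
  proof (rule mvt_simple[OF y(1)])
    fix x assume "x1 \<le> x" "x \<le> y"
    then have "(f has_real_derivative f' x) (at x within {x1..y})"
      by (intro DERIV_subset[OF df[rule_format]]) (use x1 y in auto)
    then show "(f has_derivative (*) (f' x)) (at x within {x1..y})"
      by (simp add: has_field_derivative_def)
  qed
  then obtain \<xi> where xi: "\<xi> \<in> {x1<..<y}" "f y - f x1 = f' \<xi> * (y - x1)" by auto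
  have "f' \<xi> < 0" using c xi y by auto
  then have "f' \<xi> * (y - x1) < 0" using xi by (intro mult_neg_pos) auto
  then have "f y < f x1" using xi by linarith
  moreover have "f x1 \<le> f y" using mn x1 y by auto
  ultimately show False by simp
qed

lemma periodic_min:
  fixes f f' f'' :: "real \<Rightarrow> real"
  assumes df: "\<forall>x\<in>{a..b}. (f has_real_derivative f' x) (at x within {a..b})"
    and df': "\<forall>x\<in>{a..b}. (f' has_real_derivative f'' x) (at x within {a..b})"
    and ab: "a < b" and per: "f a = f b" "f' a = f' b"
    and x0: "x0 \<in> {a..<b}" and mn: "\<forall>s\<in>{a..b}. f x0 \<le> f s"
  shows "f'' x0 \<ge> 0"
proof -
  have mna: "\<forall>s\<in>{a..b}. f a \<le> f s" if "x0 = a \<or> x0 = b" using that mn per by auto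
  show ?thesis
  proof (cases "x0 = a \<or> x0 = b")
    case True
    have db: "(f has_real_derivative f' b) (at b within {a..b})" using df ab by auto
    have da: "(f has_real_derivative f' a) (at a within {a..b})" using df ab by auto
    have mnb: "\<forall>s\<in>{a..b}. f b \<le> f s" using mna[OF True] per by auto
    have l: "f' b \<le> 0" by (rule deriv_min_left[OF db ab order_refl mnb])
    have r: "f' a \<ge> 0" by (rule deriv_min_right[OF da ab order_refl mna[OF True]])
    have "f'' a \<ge> 0"
      by (rule second_deriv_min[OF df df' order_refl ab]) (use l r per mna[OF True] in auto)
    then show ?thesis using True x0 by auto
  next
    case False
    then have x: "a < x0" "x0 < b" using x0 by auto
    have l: "f' x0 \<le> 0"
      by (rule deriv_min_left[of f "f' x0" x0 "{a..b}" a, OF _ x(1)]) (use df x0 mn in auto)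
    have r: "f' x0 \<ge> 0"
      by (rule deriv_min_right[of f "f' x0" x0 "{a..b}" b, OF _ x(2)]) (use df x0 mn in auto)
    show ?thesis
      by (rule second_deriv_min[OF df df' _ x(2)]) (use l r mn x in auto)
  qed
qed

lemma shift_range: "0 < h \<Longrightarrow> h < 2*pi \<Longrightarrow> x \<in> {0..2*pi} \<Longrightarrow> shift h x \<in> {0..2*pi}"
  unfolding shift_def by auto

theorem theorem4:
  fixes h0 \<alpha> T :: real
    and k k' k'' \<phi> \<phi>' \<phi>'' :: "real \<Rightarrow> real"
    and u ux uxx ut :: "real \<Rightarrow> real \<Rightarrow> real \<Rightarrow> real"
  assumes h0: "0 < h0" "h0 < 2*pi"
    and alpha: "0 < \<alpha>" and T: "0 < T"
    and k_C2: "C2_on 0 (2*pi) k k' k''"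
    and k_pos: "\<forall>x\<in>{0..2*pi}. k x > 0"
    and k_per: "k 0 = k (2*pi)" "k' 0 = k' (2*pi)"
    and phi_C2: "C2_on (-h0) (2*pi) \<phi> \<phi>' \<phi>''"
    and phi_nonneg: "\<forall>x\<in>{-h0..2*pi}. \<phi> x \<ge> 0"
    and phi_int: "integral {0..2*pi} \<phi> = 1"
    and phi_per: "\<forall>x\<in>{-h0..0}. \<phi> x = \<phi> (x + 2*pi)"
    and sol_reg: "\<forall>h\<in>{0<..h0}. C21 T (u h) (ux h) (uxx h) (ut h)"
    and sol_eq: "\<forall>h\<in>{0<..h0}. \<forall>x\<in>{0..2*pi}. \<forall>t\<in>{0..T}.
        ut h x t = u h x t * (k x * u h (shift h x) t - fterm k h (u h) t) + \<alpha> * uxx h x t"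
    and sol_init: "\<forall>h\<in>{0<..h0}. \<forall>x\<in>{0..2*pi}. u h x 0 = \<phi> x"
    and sol_bc: "\<forall>h\<in>{0<..h0}. \<forall>t\<in>{0..T}. u h 0 t = u h (2*pi) t \<and> ux h 0 t = ux h (2*pi) t"
    and bounded: "\<exists>M. \<forall>h\<in>{0<..h0}. \<forall>x\<in>{0..2*pi}. \<forall>t\<in>{0..T}.
        \<bar>u h x t\<bar> + \<bar>ux h x t\<bar> + \<bar>uxx h x t\<bar> + \<bar>ut h x t\<bar> \<le> M"
  shows "\<exists>hs\<in>{0<..h0}. \<forall>h\<in>{0<..hs}. \<forall>x\<in>{0..2*pi}. \<forall>t\<in>{0..T}. u h x t \<ge> 0"
proof (rule bexI[of _ h0], rule ballI)
  show "h0 \<in> {0<..h0}" using h0 by auto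
next
  fix h assume hh: "h \<in> {0<..h0}"
  obtain M where M: "\<forall>h\<in>{0<..h0}. \<forall>x\<in>{0..2*pi}. \<forall>t\<in>{0..T}.
        \<bar>u h x t\<bar> + \<bar>ux h x t\<bar> + \<bar>uxx h x t\<bar> + \<bar>ut h x t\<bar> \<le> M" using bounded by blast
  have kc: "continuous_on {0..2*pi} k" using k_C2 unfolding C2_on_def by blast
  have "bounded (k ` {0..2*pi})" by (rule compact_imp_bounded[OF compact_continuous_image[OF kc compact_Icc]])
  then obtain K where K: "\<forall>x\<in>{0..2*pi}. \<bar>k x\<bar> \<le> K" unfolding bounded_iff by auto
  have K0: "K \<ge> 0" using K[rule_format, of 0] by auto
  define w where "w = u h"
  have wM: "\<bar>w x t\<bar> \<le> M" if "x \<in> {0..2*pi}" "t \<in> {0..T}" for x t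
    using M[rule_format, OF hh that] unfolding w_def by linarith
  have M0: "M \<ge> 0" using wM[of 0 0] T by force
  have reg: "C21 T w (ux h) (uxx h) (ut h)" using sol_reg hh unfolding w_def by blast
  have shr: "shift h x \<in> {0..2*pi}" if "x \<in> {0..2*pi}" for x
    using shift_range[OF _ _ that, of h] hh h0 by auto
  define c where "c x t = k x * w (shift h x) t - fterm k h w t" for x t
  define C where "C = K * M + K * M * M * (2*pi)"
  have cb: "\<bar>c x t\<bar> \<le> C" if x: "x \<in> {0..2*pi}" and t: "t \<in> {0..T}" for x t
  proof -
    have "\<bar>k x * w (shift h x) t\<bar> \<le> K * M"
      unfolding abs_mult by (intro mult_mono K[rule_format] wM shr x t) (use K0 in auto)
    moreover have "\<bar>fterm k h w t\<bar> \<le> K * M * M * (2*pi)"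
    proof (cases "(\<lambda>x. k x * w x t * w (shift h x) t) integrable_on {0..2*pi}")
      case True
      have "norm (integral {0..2*pi} (\<lambda>x. k x * w x t * w (shift h x) t))
            \<le> integral {0..2*pi} (\<lambda>x. K * M * M)"
      proof (rule integral_norm_bound_integral[OF True])
        show "(\<lambda>x. K * M * M) integrable_on {0..2*pi}" by (rule integrable_const_ivl)
        fix y assume y: "y \<in> {0..2*pi}"
        show "norm (k y * w y t * w (shift h y) t) \<le> K * M * M"
          unfolding real_norm_def abs_mult
          by (intro mult_mono K[rule_format] wM shr y t) (use K0 M0 in auto)
      qed
      then show ?thesis unfolding fterm_def by (simp add: algebra_simps)
    next
      case False
      then show ?thesis unfolding fterm_def using K0 M0 by (simp add: not_integrable_integral)
    qed
    ultimately show ?thesis unfolding c_def C_def by linarith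
  qed
  define l where "l = C + 1"
  define v where "v p = exp (-l * snd p) * w (fst p) (snd p)" for p
  have cw: "continuous_on ({0..2*pi} \<times> {0..T}) (\<lambda>p. w (fst p) (snd p))"
    using reg unfolding C21_def case_prod_unfold by blast
  have cv: "continuous_on ({0..2*pi} \<times> {0..T}) v"
    unfolding v_def by (intro continuous_intros cw)
  obtain p0 where p0: "p0 \<in> {0..2*pi} \<times> {0..T}" and pmin: "\<forall>q\<in>{0..2*pi} \<times> {0..T}. v p0 \<le> v q"
    using continuous_attains_inf[OF compact_Times[OF compact_Icc compact_Icc] _ cv] T by auto
  obtain x0 t0 where p0e: "p0 = (x0, t0)" by (cases p0)
  show "\<forall>x\<in>{0..2*pi}. \<forall>t\<in>{0..T}. 0 \<le> u h x t"
  proof (cases "v p0 \<ge> 0")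
    case True
    show ?thesis
    proof (intro ballI)
      fix x t assume x: "x \<in> {0..2*pi}" and t: "t \<in> {0..T}"
      have "v p0 \<le> v (x, t)" using pmin x t by blast
      then have "0 \<le> v (x, t)" using True by linarith
      then show "0 \<le> u h x t" unfolding v_def w_def by (simp add: zero_le_mult_iff)
    qed
  next
    case False
    then have neg: "v (x0,t0) < 0" using p0e by simp
    have x0r: "x0 \<in> {0..2*pi}" and t0r: "t0 \<in> {0..T}" using p0 p0e by auto
    have bc: "w 0 t = w (2*pi) t" "ux h 0 t = ux h (2*pi) t" if "t \<in> {0..T}" for t
      using sol_bc hh that unfolding w_def by auto
    define x1 where "x1 = (if x0 = 2*pi then 0 else x0)"
    have x1r: "x1 \<in> {0..<2*pi}" using x0r unfolding x1_def by auto
    have vx1: "v (x1,t0) = v (x0,t0)" unfolding x1_def v_def using bc(1)[OF t0r] by auto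
    have vmin: "\<forall>q\<in>{0..2*pi}\<times>{0..T}. v (x1,t0) \<le> v q" using pmin p0e vx1 by simp
    have wneg: "w x1 t0 < 0" using neg vx1 unfolding v_def by (simp add: mult_less_0_iff)
    have t0pos: "t0 > 0"
    proof (rule ccontr)
      assume "\<not> t0 > 0" then have "t0 = 0" using t0r by auto
      moreover have "w x1 0 = \<phi> x1" using sol_init hh x1r unfolding w_def by auto
      moreover have "\<phi> x1 \<ge> 0" using phi_nonneg x1r h0 by auto
      ultimately show False using wneg by simp
    qed
    have dx: "\<forall>x\<in>{0..2*pi}. ((\<lambda>y. w y t0) has_real_derivative ux h x t0) (at x within {0..2*pi})"
     and dxx: "\<forall>x\<in>{0..2*pi}. ((\<lambda>y. ux h y t0) has_real_derivative uxx h x t0) (at x within {0..2*pi})"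
     and dt: "((\<lambda>s. w x1 s) has_real_derivative ut h x1 t0) (at t0 within {0..T})"
      using reg t0r x1r unfolding C21_def by auto
    have smin: "\<forall>s\<in>{0..2*pi}. w x1 t0 \<le> w s t0"
    proof
      fix s assume "s \<in> {0..2*pi}"
      then have "v (x1,t0) \<le> v (s,t0)" using vmin t0r by auto
      then show "w x1 t0 \<le> w s t0" unfolding v_def by simp
    qed
    have wxx: "uxx h x1 t0 \<ge> 0"
      by (rule periodic_min[OF dx dxx _ bc(1)[OF t0r] bc(2)[OF t0r] x1r smin]) simp
    have e: "((\<lambda>s. exp (- l * s)) has_real_derivative (exp (- l * t0) * (-l))) (at t0 within {0..T})"
      by (auto intro!: derivative_eq_intros)
    have tmin: "\<forall>s\<in>{0..T}. exp (- l * t0) * w x1 t0 \<le> exp (- l * s) * w x1 s"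
    proof
      fix s assume "s \<in> {0..T}"
      then have "v (x1,t0) \<le> v (x1,s)" using vmin x1r by auto
      then show "exp (- l * t0) * w x1 t0 \<le> exp (- l * s) * w x1 s" unfolding v_def by simp
    qed
    have D: "exp (- l * t0) * (-l) * w x1 t0 + ut h x1 t0 * exp (- l * t0) \<le> 0"
      by (rule deriv_min_left[OF DERIV_mult[OF e dt] t0pos _ tmin]) (use t0r in auto)
    then have "exp (- l * t0) * (ut h x1 t0 - l * w x1 t0) \<le> 0" by (simp add: algebra_simps)
    then have D2: "ut h x1 t0 - l * w x1 t0 \<le> 0" by (simp add: mult_le_0_iff)
    have eq: "ut h x1 t0 = w x1 t0 * c x1 t0 + \<alpha> * uxx h x1 t0"
      using sol_eq hh x1r t0r unfolding c_def w_def by auto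
    have "\<bar>c x1 t0\<bar> \<le> C" using cb x1r t0r by auto
    then have "c x1 t0 - l < 0" unfolding l_def by linarith
    then have "w x1 t0 * (c x1 t0 - l) > 0" using wneg by (intro mult_neg_neg) auto
    moreover have "\<alpha> * uxx h x1 t0 \<ge> 0" using alpha wxx by simp
    ultimately have "ut h x1 t0 - l * w x1 t0 > 0" unfolding eq by (simp add: algebra_simps)
    then show ?thesis using D2 by linarith
  qed
qed

end
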